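(* Let $A$ be a commutative ring and $\sigma$ a hereditary torsion theory on $A$-modules of finite type. The following are equivalent: (a) $A$ is totally $\sigma$-artinian; (b) $\mathcal{K}(\sigma)=\mathcal{C}(\sigma)$, this set is finite, and $A$ is totally $\sigma_{A\setminus\mathfrak{p}}$-artinian for every $\mathfrak{p}\in\mathcal{C}(\sigma)$.
   Context: $\mathcal{L}(\tau)$ denotes the Gabriel filter of a hereditary torsion theory $\tau$. $\sigma$ is of finite type if every ideal in $\mathcal{L}(\sigma)$ contains a finitely generated ideal in $\mathcal{L}(\sigma)$. $A$ is totally $\tau$-artinian if for every descending chain of ideals $\mathfrak{a}_1\supseteq\mathfrak{a}_2\supseteq\cdots$ there exist $m$ and $\mathfrak{h}\in\mathcal{L}(\tau)$ with $\mathfrak{a}_m\mathfrak{h}\subseteq\mathfrak{a}_s$ for all $s\ge m$. For a prime $\mathfrak{p}$, $\sigma_{A\setminus\mathfrak{p}}$ has Gabriel filter $\{\mathfrak{a}:\mathfrak{a}\not\subseteq\mathfrak{p}\}$. $\mathcal{K}(\sigma)$ is the set of primes $\mathfrak{p}$ with $\mathfrak{p}\notin\mathcal{L}(\sigma)$, and $\mathcal{C}(\sigma)$ is the set of maximal elements of $\mathcal{K}(\sigma)$. *)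

theory Defs
  imports "HOL-Algebra.Ideal_Product"
begin

text \<open>A hereditary torsion theory on A-modules is represented by its Gabriel filter
  (these correspond bijectively).  Gabriel filter of ideals of a commutative ring R.\<close>

definition colon_ideal :: "('a, 'b) ring_scheme \<Rightarrow> 'a set \<Rightarrow> 'a \<Rightarrow> 'a set" where
  "colon_ideal R J x = {y \<in> carrier R. y \<otimes>\<^bsub>R\<^esub> x \<in> J}"

definition gabriel_filter :: "('a, 'b) ring_scheme \<Rightarrow> 'a set set \<Rightarrow> bool" where
  "gabriel_filter R F \<longleftrightarrow>
     (\<forall>I\<in>F. ideal I R) \<and> carrier R \<in> F \<and>
     (\<forall>I\<in>F. \<forall>J. ideal J R \<and> I \<subseteq> J \<longrightarrow> J \<in> F) \<and>
     (\<forall>I\<in>F. \<forall>J\<in>F. I \<inter> J \<in> F) \<and>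
     (\<forall>I\<in>F. \<forall>x\<in>carrier R. colon_ideal R I x \<in> F) \<and>
     (\<forall>J. ideal J R \<and> (\<exists>I\<in>F. \<forall>x\<in>I. colon_ideal R J x \<in> F) \<longrightarrow> J \<in> F)"

definition finite_type :: "('a, 'b) ring_scheme \<Rightarrow> 'a set set \<Rightarrow> bool" where
  "finite_type R F \<longleftrightarrow>
     (\<forall>I\<in>F. \<exists>J\<in>F. J \<subseteq> I \<and> (\<exists>S. finite S \<and> S \<subseteq> carrier R \<and> J = Idl\<^bsub>R\<^esub> S))"

definition totally_artinian :: "('a, 'b) ring_scheme \<Rightarrow> 'a set set \<Rightarrow> bool" where
  "totally_artinian R F \<longleftrightarrow>
     (\<forall>a :: nat \<Rightarrow> 'a set. (\<forall>n. ideal (a n) R) \<and> (\<forall>n. a (Suc n) \<subseteq> a n) \<longrightarrow>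
        (\<exists>m. \<exists>h\<in>F. \<forall>s\<ge>m. a m \<cdot>\<^bsub>R\<^esub> h \<subseteq> a s))"

text \<open>Gabriel filter of sigma_{A \ p}.\<close>
definition loc_filter :: "('a, 'b) ring_scheme \<Rightarrow> 'a set \<Rightarrow> 'a set set" where
  "loc_filter R p = {I. ideal I R \<and> \<not> I \<subseteq> p}"

definition K_set :: "('a, 'b) ring_scheme \<Rightarrow> 'a set set \<Rightarrow> 'a set set" where
  "K_set R F = {p. primeideal p R \<and> p \<notin> F}"

definition C_set :: "('a, 'b) ring_scheme \<Rightarrow> 'a set set \<Rightarrow> 'a set set" where
  "C_set R F = {p \<in> K_set R F. \<forall>q\<in>K_set R F. p \<subseteq> q \<longrightarrow> q = p}"

end

theory Submission imports Defs "HOL-Algebra.Ring_Divisibility" begin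
lemma (in cring) colon_ideal_ideal:
  assumes J: "ideal J R" and x: "x \<in> carrier R"
  shows "ideal (colon_ideal R J x) R"
  unfolding colon_ideal_def
proof (intro subgroup.intro idealI[OF ring_axioms])
  show "{y \<in> carrier R. y \<otimes> x \<in> J} \<subseteq> carrier (add_monoid R)" by auto
  fix a b assume a: "a \<in> {y \<in> carrier R. y \<otimes> x \<in> J}"
  have Ja: "additive_subgroup J R" using J ideal.axioms(1) by blast
  then show "inv\<^bsub>add_monoid R\<^esub> a \<in> {y \<in> carrier R. y \<otimes> x \<in> J}"
    using a x by (simp add: a_inv_def[symmetric] l_minus additive_subgroup.a_inv_closed)
  show "\<And>y. y \<in> carrier R \<Longrightarrow> y \<otimes> a \<in> {y \<in> carrier R. y \<otimes> x \<in> J}"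
    using a x J by (simp add: m_assoc ideal.I_l_closed)
  show "\<And>y. y \<in> carrier R \<Longrightarrow> a \<otimes> y \<in> {y \<in> carrier R. y \<otimes> x \<in> J}"
  proof -
    fix y assume y: "y \<in> carrier R"
    have "a \<otimes> y \<otimes> x = (a \<otimes> x) \<otimes> y" using a x y by (simp add: m_assoc m_comm[of y x])
    thus "a \<otimes> y \<in> {y \<in> carrier R. y \<otimes> x \<in> J}" using a x y J by (simp add: ideal.I_r_closed)
  qed
  assume b: "b \<in> {y \<in> carrier R. y \<otimes> x \<in> J}"
  show "a \<otimes>\<^bsub>add_monoid R\<^esub> b \<in> {y \<in> carrier R. y \<otimes> x \<in> J}"
    using a b x Ja by (simp add: l_distr additive_subgroup.a_closed)
next
  show "\<one>\<^bsub>add_monoid R\<^esub> \<in> {y \<in> carrier R. y \<otimes> x \<in> J}"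
    using x J by (simp add: additive_subgroup.zero_closed ideal.axioms(1))
qed

lemma gf_ideal: "gabriel_filter R F \<Longrightarrow> I \<in> F \<Longrightarrow> ideal I R"
  unfolding gabriel_filter_def by blast
lemma gf_carrier: "gabriel_filter R F \<Longrightarrow> carrier R \<in> F"
  unfolding gabriel_filter_def by blast
lemma gf_up: "gabriel_filter R F \<Longrightarrow> I \<in> F \<Longrightarrow> ideal J R \<Longrightarrow> I \<subseteq> J \<Longrightarrow> J \<in> F"
  unfolding gabriel_filter_def by (elim conjE) blast
lemma gf_last: "gabriel_filter R F \<Longrightarrow> ideal J R \<Longrightarrow> I \<in> F \<Longrightarrow> (\<And>x. x \<in> I \<Longrightarrow> colon_ideal R J x \<in> F) \<Longrightarrow> J \<in> F"
  unfolding gabriel_filter_def by (elim conjE) blast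
lemma finite_in_chain:
  assumes "finite S" "S \<subseteq> \<Union>C" and C: "C \<noteq> {}" "subset.chain A C"
  shows "\<exists>X\<in>C. S \<subseteq> X"
  using assms(1,2)
proof (induction S rule: finite_induct)
  case empty thus ?case using C(1) by blast
next
  case (insert a S)
  then obtain X where X: "X \<in> C" "S \<subseteq> X" by blast
  from insert.prems obtain Y where Y: "Y \<in> C" "a \<in> Y" by blast
  from C(2) X(1) Y(1) have "X \<subseteq> Y \<or> Y \<subseteq> X" unfolding subset_chain_def by blast
  thus ?case using X Y by blast
qed

lemma (in cring) exists_prime_above:
  assumes gf: "gabriel_filter R F" and ft: "finite_type R F" and I: "ideal I R" "I \<notin> F"
  shows "\<exists>p. primeideal p R \<and> p \<notin> F \<and> I \<subseteq> p"
proof -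
  let ?A = "{J. ideal J R \<and> I \<subseteq> J \<and> J \<notin> F}"
  have "\<exists>M\<in>?A. \<forall>X\<in>?A. M \<subseteq> X \<longrightarrow> X = M"
  proof (rule subset_Zorn_nonempty)
    have "I \<in> ?A" using I by simp
    thus "?A \<noteq> {}" by auto
    fix C assume C: "C \<noteq> {}" "subset.chain ?A C"
    have CA: "C \<subseteq> ?A" and Ccmp: "\<forall>X\<in>C. \<forall>Y\<in>C. X \<subseteq> Y \<or> Y \<subseteq> X"
      using C(2) unfolding subset_chain_def by auto
    have ch: "subset.chain {I. ideal I R} C" unfolding subset_chain_def using CA Ccmp by auto
    have id: "ideal (\<Union>C) R" using chain_Union_is_ideal[OF ch] C(1) by simp
    obtain X0 where "X0 \<in> C" using C(1) by auto
    hence sub: "I \<subseteq> \<Union>C" using CA by auto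
    have "\<Union>C \<notin> F"
    proof
      assume UF: "\<Union>C \<in> F"
      have "\<forall>I\<in>F. \<exists>J\<in>F. J \<subseteq> I \<and> (\<exists>S. finite S \<and> S \<subseteq> carrier R \<and> J = Idl S)"
        using ft by (simp only: finite_type_def)
      hence "\<exists>J\<in>F. J \<subseteq> \<Union>C \<and> (\<exists>S. finite S \<and> S \<subseteq> carrier R \<and> J = Idl S)"
        using UF by (rule bspec)
      then obtain J where J1: "J \<in> F" "J \<subseteq> \<Union>C" and "\<exists>S. finite S \<and> S \<subseteq> carrier R \<and> J = Idl S"
        by (elim bexE conjE)
      then obtain S where "finite S" "S \<subseteq> carrier R" "J = Idl S" by (elim exE conjE)
      note JS = J1 this
      have "S \<subseteq> J" using genideal_self[OF JS(4)] JS(5) by simp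
      hence "S \<subseteq> \<Union>C" using JS(2) by (rule subset_trans)
      then obtain X where X: "X \<in> C" "S \<subseteq> X" using finite_in_chain[OF JS(3) _ C(1) C(2)] by blast
      have Xi: "ideal X R" "X \<notin> F" using X(1) CA by auto
      have "J \<subseteq> X" using genideal_minimal[OF Xi(1) X(2)] JS(5) by simp
      hence "X \<in> F" using gf_up[OF gf JS(1) Xi(1)] by blast
      thus False using Xi(2) by blast
    qed
    thus "\<Union>C \<in> ?A" using id sub by blast
  qed
  then obtain p where p: "p \<in> ?A" and max: "\<forall>X\<in>?A. p \<subseteq> X \<longrightarrow> X = p" by blast
  have pi: "ideal p R" "I \<subseteq> p" "p \<notin> F" using p by auto
  have "primeideal p R"
  proof (rule primeidealI[OF pi(1) is_cring])
    show "carrier R \<noteq> p" using gf_carrier[OF gf] pi(3) by blast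
    fix a b assume a: "a \<in> carrier R" and b: "b \<in> carrier R" and ab: "a \<otimes> b \<in> p"
    show "a \<in> p \<or> b \<in> p"
    proof (rule ccontr)
      assume nab: "\<not> (a \<in> p \<or> b \<in> p)"
      define Ca where "Ca = colon_ideal R p a"
      have Cai: "ideal Ca R" unfolding Ca_def by (rule colon_ideal_ideal[OF pi(1) a])
      have pCa: "p \<subseteq> Ca"
      proof
        fix y assume y: "y \<in> p"
        have "y \<in> carrier R" using ideal.Icarr[OF pi(1) y] .
        moreover have "y \<otimes> a \<in> p" using ideal.I_r_closed[OF pi(1) y a] .
        ultimately show "y \<in> Ca" unfolding Ca_def colon_ideal_def by simp
      qed
      have bCa: "b \<in> Ca" unfolding Ca_def colon_ideal_def using ab a b by (simp add: m_comm)
      have CaF: "Ca \<in> F"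
      proof (rule ccontr)
        assume "Ca \<notin> F"
        hence "Ca \<in> ?A" using Cai pCa pi(2) by blast
        hence "Ca = p" using max pCa by blast
        thus False using bCa nab by blast
      qed
      define Q where "Q = p <+>\<^bsub>R\<^esub> PIdl a"
      have Qi: "ideal Q R" unfolding Q_def by (rule add_ideals[OF pi(1) cgenideal_ideal[OF a]])
      have "\<zero> = \<zero> \<otimes> a" using a by simp
      hence z0: "\<zero> \<in> PIdl a" unfolding cgenideal_def by blast
      have pQ: "p \<subseteq> Q"
      proof
        fix q assume "q \<in> p"
        hence "q \<oplus> \<zero> \<in> Q" unfolding Q_def set_add_def' using z0 by blast
        moreover have "q \<oplus> \<zero> = q" using ideal.Icarr[OF pi(1) \<open>q \<in> p\<close>] by simp
        ultimately show "q \<in> Q" by simp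
      qed
      have aQ: "a \<in> Q"
      proof -
        have "a \<in> PIdl a" using cgenideal_self[OF a] .
        moreover have "\<zero> \<in> p" using pi(1) by (simp add: additive_subgroup.zero_closed ideal.axioms(1))
        ultimately have "\<zero> \<oplus> a \<in> Q" unfolding Q_def set_add_def' by blast
        thus ?thesis using a by simp
      qed
      have QF: "Q \<in> F"
      proof (rule ccontr)
        assume "Q \<notin> F"
        hence "Q \<in> ?A" using Qi pQ pi(2) by blast
        hence "Q = p" using max pQ by blast
        thus False using aQ nab by blast
      qed
      have "p \<in> F"
      proof (rule gf_last[OF gf pi(1) QF])
        fix z assume "z \<in> Q"
        then obtain q w where qw: "q \<in> p" "w \<in> PIdl a" "z = q \<oplus> w"
          unfolding Q_def set_add_def' by blast
        then obtain r where r: "r \<in> carrier R" "w = r \<otimes> a" unfolding cgenideal_def by blast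
        have qr: "q \<in> p" "r \<in> carrier R" using qw(1) r(1) by blast+
        have qr3: "z = q \<oplus> r \<otimes> a" using qw(3) r(2) by simp
        note qr = qr qr3
        have qc: "q \<in> carrier R" using ideal.Icarr[OF pi(1) qr(1)] .
        have zc: "z \<in> carrier R" unfolding qr(3) using qc qr(2) a by (intro a_closed m_closed)
        have "Ca \<subseteq> colon_ideal R p z"
        proof
          fix y assume "y \<in> Ca"
          hence y: "y \<in> carrier R" "y \<otimes> a \<in> p" unfolding Ca_def colon_ideal_def by auto
          have "y \<otimes> z = y \<otimes> q \<oplus> y \<otimes> (r \<otimes> a)"
            unfolding qr(3) using y(1) qr(2) qc a by (simp add: r_distr)
          also have "\<dots> = q \<otimes> y \<oplus> r \<otimes> (y \<otimes> a)"
            using m_comm[OF y(1) qc] m_lcomm[OF y(1) qr(2) a] by simp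
          finally have "y \<otimes> z = q \<otimes> y \<oplus> r \<otimes> (y \<otimes> a)" .
          moreover have "q \<otimes> y \<in> p" using ideal.I_r_closed[OF pi(1) qr(1) y(1)] .
          moreover have "r \<otimes> (y \<otimes> a) \<in> p" using ideal.I_l_closed[OF pi(1) y(2) qr(2)] .
          ultimately have "y \<otimes> z \<in> p" using additive_subgroup.a_closed[OF ideal.axioms(1)[OF pi(1)]] by simp
          thus "y \<in> colon_ideal R p z" unfolding colon_ideal_def using y by blast
        qed
        thus "colon_ideal R p z \<in> F" using gf_up[OF gf CaF colon_ideal_ideal[OF pi(1) zc]] by blast
      qed
      thus False using pi(3) by blast
    qed
  qed
  thus ?thesis using pi by blast
qed


lemma (in cring) inter_prime:
  assumes P: "primeideal P R" and f: "\<And>i. ideal (f i) R"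
  shows "(\<Inter>i\<le>(n::nat). f i) \<subseteq> P \<Longrightarrow> \<exists>i\<le>n. f i \<subseteq> P"
proof (induction n)
  case 0 thus ?case by simp
next
  case (Suc n)
  show ?case
  proof (cases "f (Suc n) \<subseteq> P")
    case True thus ?thesis by blast
  next
    case False
    then obtain b where b: "b \<in> f (Suc n)" "b \<notin> P" by blast
    have bc: "b \<in> carrier R" using b(1) ideal.Icarr[OF f] by blast
    have "(\<Inter>i\<le>n. f i) \<subseteq> P"
    proof
      fix x assume x: "x \<in> (\<Inter>i\<le>n. f i)"
      have x0: "x \<in> f 0" using x by blast
      have xc: "x \<in> carrier R" using ideal.Icarr[OF f x0] .
      have "x \<otimes> b \<in> (\<Inter>i\<le>Suc n. f i)"
      proof -
        have "\<forall>i\<le>n. x \<otimes> b \<in> f i" using x ideal.I_r_closed[OF f _ bc] by blast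
        moreover have "x \<otimes> b \<in> f (Suc n)" using ideal.I_l_closed[OF f b(1) xc] .
        ultimately show ?thesis using le_Suc_eq by auto
      qed
      hence "x \<otimes> b \<in> P" using Suc.prems by blast
      thus "x \<in> P" using primeideal.I_prime[OF P xc bc] b(2) by blast
    qed
    then obtain i where "i \<le> n" "f i \<subseteq> P" using Suc.IH by blast
    thus ?thesis using le_SucI by blast
  qed
qed

lemma TA_apply:
  assumes "totally_artinian R F" 
  shows "(\<forall>n. ideal (a n) R) \<Longrightarrow> (\<forall>n. a (Suc n) \<subseteq> a n) \<Longrightarrow> \<exists>m. \<exists>h\<in>F. \<forall>s\<ge>m. a m \<cdot>\<^bsub>R\<^esub> h \<subseteq> a s"
  using assms unfolding totally_artinian_def by (drule_tac x=a in spec) blast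

lemma dec_chain:
  fixes a :: "nat \<Rightarrow> 'a set"
  assumes "\<And>n. a (Suc n) \<subseteq> a n" "i \<le> j"
  shows "a j \<subseteq> a i"
  using lift_Suc_antimono_le[of a, OF assms(1) assms(2)] .

lemma (in cring) pow_notin_prime:
  assumes P: "primeideal p R" and x: "x \<in> carrier R" "x \<notin> p"
  shows "x [^] (n::nat) \<notin> p"
proof (induction n)
  case 0
  have pI: "ideal p R" using P primeideal.axioms(1) by blast
  show ?case
  proof
    assume "x [^] (0::nat) \<in> p"
    hence "\<one> \<in> p" by simp
    hence "p = carrier R" using ideal.one_imp_carrier[OF pI] by blast
    thus False using primeideal.I_notcarr[OF P] by simp
  qed
next
  case (Suc n)
  show ?case
  proof
    assume "x [^] Suc n \<in> p"
    hence "x [^] n \<otimes> x \<in> p" by simp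
    hence "x [^] n \<in> p \<or> x \<in> p" using primeideal.I_prime[OF P nat_pow_closed[OF x(1)] x(1)] by blast
    thus False using Suc.IH x(2) by blast
  qed
qed

lemma (in cring) notsub_K:
  assumes gf: "gabriel_filter R F" and p: "p \<in> K_set R F" and h: "h \<in> F"
  shows "\<not> h \<subseteq> p"
proof
  assume hp: "h \<subseteq> p"
  have "primeideal p R" using p unfolding K_set_def by blast
  hence "ideal p R" using primeideal.axioms(1) by blast
  hence "p \<in> F" using gf_up[OF gf h _ hp] by blast
  thus False using p unfolding K_set_def by blast
qed

lemma (in cring) K_eq_C:
  assumes gf: "gabriel_filter R F" and TA: "totally_artinian R F"
  shows "K_set R F = C_set R F"
proof
  show "C_set R F \<subseteq> K_set R F" unfolding C_set_def by blast
  show "K_set R F \<subseteq> C_set R F"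
  proof
    fix p assume pK: "p \<in> K_set R F"
    have "\<forall>q\<in>K_set R F. p \<subseteq> q \<longrightarrow> q = p"
    proof (intro ballI impI)
      fix q assume qK: "q \<in> K_set R F" and pq: "p \<subseteq> q"
      show "q = p"
      proof (rule ccontr)
        assume "q \<noteq> p"
        then obtain x where x: "x \<in> q" "x \<notin> p" using pq by blast
        have pP: "primeideal p R" and qP: "primeideal q R" using pK qK unfolding K_set_def by auto
        have qI: "ideal q R" using qP primeideal.axioms(1) by blast
        have pI: "ideal p R" using pP primeideal.axioms(1) by blast
        have xc: "x \<in> carrier R" using ideal.Icarr[OF qI x(1)] .
        define a where "a = (\<lambda>n::nat. PIdl (x [^] n))"
        have ai: "\<forall>n. ideal (a n) R" unfolding a_def using cgenideal_ideal[OF nat_pow_closed[OF xc]] by blast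
        have ad: "\<forall>n. a (Suc n) \<subseteq> a n"
        proof
          fix n show "a (Suc n) \<subseteq> a n"
          proof
            fix z assume "z \<in> a (Suc n)"
            then obtain y where y: "y \<in> carrier R" "z = y \<otimes> x [^] Suc n" unfolding a_def cgenideal_def by blast
            have "z = y \<otimes> (x [^] n \<otimes> x)" using y(2) by simp
            also have "\<dots> = (y \<otimes> x) \<otimes> x [^] n"
              using m_comm[OF nat_pow_closed[OF xc] xc] m_assoc[OF y(1) xc nat_pow_closed[OF xc]] by simp
            finally have "z = (y \<otimes> x) \<otimes> x [^] n" .
            moreover have "y \<otimes> x \<in> carrier R" using m_closed[OF y(1) xc] .
            ultimately show "z \<in> a n" unfolding a_def cgenideal_def by blast
          qed
        qed
        have "\<exists>m. \<exists>h\<in>F. \<forall>s\<ge>m. a m \<cdot> h \<subseteq> a s"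
          using TA_apply[OF TA] ai ad by blast
        then obtain m h where h: "h \<in> F" "\<forall>s\<ge>m. a m \<cdot> h \<subseteq> a s" by blast
        obtain y where y: "y \<in> h" "y \<notin> q" using notsub_K[OF gf qK h(1)] by blast
        have yc: "y \<in> carrier R" using ideal.Icarr[OF gf_ideal[OF gf h(1)] y(1)] .
        have xmc: "x [^] m \<in> carrier R" using nat_pow_closed[OF xc] .
        have xm: "x [^] m \<in> a m" unfolding a_def using cgenideal_self[OF xmc] .
        have "x [^] m \<otimes> y \<in> a m \<cdot> h" by (rule ideal_prod.prod[OF xm y(1)])
        moreover have "a m \<cdot> h \<subseteq> a (Suc m)" using h(2) by simp
        ultimately have "x [^] m \<otimes> y \<in> a (Suc m)" by blast
        then obtain r where r: "r \<in> carrier R" "x [^] m \<otimes> y = r \<otimes> x [^] Suc m"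
          unfolding a_def cgenideal_def by blast
        have xr: "x \<otimes> r \<in> carrier R" using m_closed[OF xc r(1)] .
        define t where "t = y \<oplus> \<ominus> (x \<otimes> r)"
        have tc: "t \<in> carrier R" unfolding t_def using yc xr by simp
        have eq1: "x [^] m \<otimes> y = x [^] m \<otimes> (x \<otimes> r)"
        proof -
          have "x [^] m \<otimes> y = r \<otimes> (x [^] m \<otimes> x)" using r(2) by (simp only: nat_pow_Suc)
          also have "\<dots> = (x [^] m \<otimes> x) \<otimes> r" by (rule m_comm[OF r(1) m_closed[OF xmc xc]])
          also have "\<dots> = x [^] m \<otimes> (x \<otimes> r)" by (rule m_assoc[OF xmc xc r(1)])
          finally show ?thesis .
        qed
        have "x [^] m \<otimes> t = x [^] m \<otimes> y \<oplus> x [^] m \<otimes> (\<ominus> (x \<otimes> r))"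
          unfolding t_def using r_distr[OF yc _ xmc] xr by simp
        also have "\<dots> = x [^] m \<otimes> (x \<otimes> r) \<oplus> \<ominus> (x [^] m \<otimes> (x \<otimes> r))"
          using eq1 r_minus[OF xmc xr] by simp
        also have "\<dots> = \<zero>" using r_neg[OF m_closed[OF xmc xr]] .
        finally have "x [^] m \<otimes> t \<in> p"
          using additive_subgroup.zero_closed[OF ideal.axioms(1)[OF pI]] by simp
        moreover have "x [^] m \<notin> p" using pow_notin_prime[OF pP xc x(2)] .
        ultimately have "t \<in> p" using primeideal.I_prime[OF pP xmc tc] by blast
        hence "t \<in> q" using pq by blast
        moreover have "x \<otimes> r \<in> q" using ideal.I_r_closed[OF qI x(1) r(1)] .
        ultimately have "t \<oplus> x \<otimes> r \<in> q" using additive_subgroup.a_closed[OF ideal.axioms(1)[OF qI]] by blast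
        moreover have "t \<oplus> x \<otimes> r = y" unfolding t_def
          using a_assoc[OF yc a_inv_closed[OF xr] xr] l_neg[OF xr] yc by simp
        ultimately show False using y(2) by simp
      qed
    qed
    thus "p \<in> C_set R F" using pK unfolding C_set_def by blast
  qed
qed


lemma (in cring) C_finite:
  assumes gf: "gabriel_filter R F" and TA: "totally_artinian R F"
  shows "finite (C_set R F)"
proof (rule ccontr)
  assume "infinite (C_set R F)"
  then obtain f :: "nat \<Rightarrow> 'a set" where f: "inj f" "range f \<subseteq> C_set R F"
    using infinite_countable_subset by blast
  have fK: "\<And>i. f i \<in> K_set R F" using f(2) unfolding C_set_def by blast
  have fP: "\<And>i. primeideal (f i) R" using fK unfolding K_set_def by blast
  have fI: "\<And>i. ideal (f i) R" using fP primeideal.axioms(1) by blast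
  define a where "a = (\<lambda>n::nat. \<Inter>i\<le>n. f i)"
  have ai: "\<And>n. ideal (a n) R"
  proof -
    fix n
    have "ideal (\<Inter>(f ` {..n})) R" by (rule i_Intersect) (use fI in auto)
    thus "ideal (a n) R" unfolding a_def .
  qed
  have ad: "\<forall>n. a (Suc n) \<subseteq> a n" unfolding a_def by auto
  have "\<exists>m. \<exists>h\<in>F. \<forall>s\<ge>m. a m \<cdot> h \<subseteq> a s"
    using TA_apply[OF TA] ai ad by blast
  then obtain m h where h: "h \<in> F" "\<forall>s\<ge>m. a m \<cdot> h \<subseteq> a s" by blast
  have hI: "ideal h R" using gf_ideal[OF gf h(1)] .
  have nh: "\<not> h \<subseteq> f (Suc m)" using notsub_K[OF gf fK h(1)] .
  have "a m \<cdot> h \<subseteq> a (Suc m)" using h(2) by simp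
  moreover have "a (Suc m) \<subseteq> f (Suc m)" unfolding a_def by auto
  ultimately have "a m \<cdot> h \<subseteq> f (Suc m)" by blast
  hence "a m \<subseteq> f (Suc m) \<or> h \<subseteq> f (Suc m)"
    using primeideal_divides_ideal_prod[OF fP ai hI] by blast
  hence "(\<Inter>i\<le>m. f i) \<subseteq> f (Suc m)" using nh unfolding a_def by blast
  then obtain i where i: "i \<le> m" "f i \<subseteq> f (Suc m)"
    using inter_prime[of "f (Suc m)" f m, OF fP fI] by blast
  have "f i \<in> C_set R F" using f(2) by blast
  hence "f (Suc m) = f i" using i(2) fK[of "Suc m"] unfolding C_set_def by blast
  hence "Suc m = i" using f(1) by (simp add: inj_eq)
  thus False using i(1) by simp
qed

lemma (in cring) loc_TA:
  assumes gf: "gabriel_filter R F" and TA: "totally_artinian R F" and pK: "p \<in> K_set R F"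
  shows "totally_artinian R (loc_filter R p)"
  unfolding totally_artinian_def
proof (intro allI impI)
  fix a :: "nat \<Rightarrow> 'a set" assume A: "(\<forall>n. ideal (a n) R) \<and> (\<forall>n. a (Suc n) \<subseteq> a n)"
  have "\<exists>m. \<exists>h\<in>F. \<forall>s\<ge>m. a m \<cdot> h \<subseteq> a s" using TA_apply[OF TA] A by blast
  then obtain m h where mh: "h \<in> F" "\<forall>s\<ge>m. a m \<cdot> h \<subseteq> a s" by blast
  have "h \<in> loc_filter R p" unfolding loc_filter_def
    using gf_ideal[OF gf mh(1)] notsub_K[OF gf pK mh(1)] by blast
  thus "\<exists>m. \<exists>h\<in>loc_filter R p. \<forall>s\<ge>m. a m \<cdot> h \<subseteq> a s" using mh(2) by blast
qed

lemma (in cring) bwd: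
  assumes gf: "gabriel_filter R F" and ft: "finite_type R F"
    and KC: "K_set R F = C_set R F" and fin: "finite (C_set R F)"
    and loc: "\<forall>p\<in>C_set R F. totally_artinian R (loc_filter R p)"
  shows "totally_artinian R F"
  unfolding totally_artinian_def
proof (intro allI impI)
  fix a :: "nat \<Rightarrow> 'a set" assume A: "(\<forall>n. ideal (a n) R) \<and> (\<forall>n. a (Suc n) \<subseteq> a n)"
  have ai: "\<And>n. ideal (a n) R" and ad: "\<And>n. a (Suc n) \<subseteq> a n" using A by auto
  have "\<forall>p\<in>C_set R F. \<exists>m. \<exists>h\<in>loc_filter R p. \<forall>s\<ge>m. a m \<cdot> h \<subseteq> a s"
  proof
    fix p assume "p \<in> C_set R F"
    hence "totally_artinian R (loc_filter R p)" using loc by blast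
    from TA_apply[OF this] show "\<exists>m. \<exists>h\<in>loc_filter R p. \<forall>s\<ge>m. a m \<cdot> h \<subseteq> a s" using A by blast
  qed
  from bchoice[OF this] obtain M where M: "\<forall>p\<in>C_set R F. \<exists>h\<in>loc_filter R p. \<forall>s\<ge>M p. a (M p) \<cdot> h \<subseteq> a s"
    by blast
  hence "\<forall>p\<in>C_set R F. \<exists>h. h \<in> loc_filter R p \<and> (\<forall>s\<ge>M p. a (M p) \<cdot> h \<subseteq> a s)" by blast
  from bchoice[OF this] obtain H where H: "\<forall>p\<in>C_set R F. H p \<in> loc_filter R p \<and> (\<forall>s\<ge>M p. a (M p) \<cdot> H p \<subseteq> a s)"
    by blast
  define m where "m = Max (insert 0 (M ` C_set R F))"
  have Mm: "\<And>p. p \<in> C_set R F \<Longrightarrow> M p \<le> m"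
    unfolding m_def using fin by (intro Max_ge) auto
  define h where "h = \<Inter>{colon_ideal R (a s) x | s x. s \<ge> m \<and> x \<in> a m}"
  have hI: "ideal h R" unfolding h_def
  proof (rule i_Intersect)
    have "\<zero> \<in> a m" using additive_subgroup.zero_closed[OF ideal.axioms(1)[OF ai]] .
    thus "{colon_ideal R (a s) x | s x. s \<ge> m \<and> x \<in> a m} \<noteq> {}" by blast
  next
    fix J assume "J \<in> {colon_ideal R (a s) x | s x. s \<ge> m \<and> x \<in> a m}"
    then obtain s x where J: "J = colon_ideal R (a s) x" "x \<in> a m" by blast
    show "ideal J R" unfolding J(1) by (rule colon_ideal_ideal[OF ai ideal.Icarr[OF ai J(2)]])
  qed
  have hprod: "\<forall>s\<ge>m. a m \<cdot> h \<subseteq> a s"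
  proof (intro allI impI subsetI)
    fix s z assume s: "m \<le> s" and z: "z \<in> a m \<cdot> h"
    from z show "z \<in> a s"
    proof (induction z rule: ideal_prod.induct)
      case (prod i j)
      have "colon_ideal R (a s) i \<in> {colon_ideal R (a s) x | s x. s \<ge> m \<and> x \<in> a m}"
        using prod(1) s by blast
      hence "j \<in> colon_ideal R (a s) i" using prod(2) unfolding h_def by blast
      hence j: "j \<otimes> i \<in> a s" "j \<in> carrier R" unfolding colon_ideal_def by auto
      have ic: "i \<in> carrier R" using ideal.Icarr[OF ai prod(1)] .
      show ?case using j(1) m_comm[OF ic j(2)] by simp
    next
      case (sum s1 s2) thus ?case using additive_subgroup.a_closed[OF ideal.axioms(1)[OF ai]] by blast
    qed
  qed
  have hF: "h \<in> F"
  proof (rule ccontr)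
    assume "h \<notin> F"
    then obtain q where q: "primeideal q R" "q \<notin> F" "h \<subseteq> q"
      using exists_prime_above[OF gf ft hI] by blast
    have "q \<in> K_set R F" unfolding K_set_def using q by blast
    hence qC: "q \<in> C_set R F" using KC by simp
    have Hq: "H q \<in> loc_filter R q" "\<forall>s\<ge>M q. a (M q) \<cdot> H q \<subseteq> a s" using H qC by auto
    have HqI: "ideal (H q) R" using Hq(1) unfolding loc_filter_def by blast
    have "H q \<subseteq> h"
    proof
      fix y assume y: "y \<in> H q"
      have yc: "y \<in> carrier R" using ideal.Icarr[OF HqI y] .
      show "y \<in> h" unfolding h_def
      proof (rule InterI)
        fix X assume "X \<in> {colon_ideal R (a s) x | s x. s \<ge> m \<and> x \<in> a m}"
        then obtain s x where X: "X = colon_ideal R (a s) x" "m \<le> s" "x \<in> a m" by blast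
        have Mqm: "M q \<le> m" using Mm[OF qC] .
        have "x \<in> a (M q)" using dec_chain[of a, OF ad Mqm] X(3) by blast
        hence "x \<otimes> y \<in> a (M q) \<cdot> H q" using ideal_prod.prod[OF _ y] by blast
        moreover have "a (M q) \<cdot> H q \<subseteq> a s" using Hq(2) Mqm X(2) by simp
        ultimately have "x \<otimes> y \<in> a s" by blast
        hence "y \<otimes> x \<in> a s" using m_comm[OF ideal.Icarr[OF ai X(3)] yc] by simp
        thus "y \<in> X" unfolding X(1) colon_ideal_def using yc by blast
      qed
    qed
    hence "H q \<subseteq> q" using q(3) by blast
    moreover have "\<not> H q \<subseteq> q" using Hq(1) unfolding loc_filter_def by blast
    ultimately show False by blast
  qed
  show "\<exists>m. \<exists>h\<in>F. \<forall>s\<ge>m. a m \<cdot> h \<subseteq> a s" using hF hprod by blast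
qed

theorem mainTheorem17:
  fixes R :: "('a, 'b) ring_scheme" and F :: "'a set set"
  assumes "cring R"
    and "gabriel_filter R F"
    and "finite_type R F"
  shows "totally_artinian R F \<longleftrightarrow>
           (K_set R F = C_set R F \<and> finite (C_set R F) \<and>
            (\<forall>p\<in>C_set R F. totally_artinian R (loc_filter R p)))"
proof
  assume TA: "totally_artinian R F"
  have KC: "K_set R F = C_set R F" using cring.K_eq_C[OF assms(1) assms(2) TA] .
  moreover have "finite (C_set R F)" using cring.C_finite[OF assms(1) assms(2) TA] .
  moreover have "\<forall>p\<in>C_set R F. totally_artinian R (loc_filter R p)"
  proof
    fix p assume "p \<in> C_set R F"
    hence "p \<in> K_set R F" using KC by simp
    thus "totally_artinian R (loc_filter R p)" using cring.loc_TA[OF assms(1) assms(2) TA] by blast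
  qed
  ultimately show "K_set R F = C_set R F \<and> finite (C_set R F) \<and>
            (\<forall>p\<in>C_set R F. totally_artinian R (loc_filter R p))" by blast
next
  assume "K_set R F = C_set R F \<and> finite (C_set R F) \<and>
            (\<forall>p\<in>C_set R F. totally_artinian R (loc_filter R p))"
  thus "totally_artinian R F" using cring.bwd[OF assms] by blast
qed

end
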